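(* Let $f$ be convex, $C^2$, with $\nabla^2 f\succ0$ everywhere, and $L_{\text{semi}}$-semi-strongly self-concordant; let $L_{\text{est}}\ge L_{\text{semi}}$ and $0<c<1$. If $x_k$ satisfies $\|\nabla f(x_k)\|_{x_k}^*\le\frac{(2c+1)^2-1}{2L_{\text{est}}}$ and $x_{k+1}$ is the AICN iterate computed from $x_k$, then $$[\nabla^2 f(x_{k+1})]^{-1}\preceq(1-c)^{-2}[\nabla^2 f(x_k)]^{-1}.$$
   Context: Local norms: $\|h\|_x=\langle\nabla^2 f(x)h,h\rangle^{1/2}$, $\|g\|_x^*=\langle g,[\nabla^2 f(x)]^{-1}g\rangle^{1/2}$; $\|H\|_{op}=\sup_{v\neq0}\|Hv\|_x^*/\|v\|_x$ at base point $x$. $f$ is $L_{\text{semi}}$-semi-strongly self-concordant if $\|\nabla^2 f(y)-\nabla^2 f(x)\|_{op}\le L_{\text{semi}}\|y-x\|_x$ for all $x,y$ (operator norm at base point $x$). AICN step with parameter $L_{\text{est}}>0$: $x_{k+1}=x_k-\alpha_k[\nabla^2 f(x_k)]^{-1}\nabla f(x_k)$ with $\alpha_k=\frac{-1+\sqrt{1+2L_{\text{est}}\|\nabla f(x_k)\|_{x_k}^*}}{L_{\text{est}}\|\nabla f(x_k)\|_{x_k}^*}$ (and $\alpha_k:=1$ if $\nabla f(x_k)=0$). $\preceq$ is the Loewner order. *)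

theory Defs
  imports "HOL-Analysis.Analysis"
begin

definition local_norm :: "(real^'a::finite \<Rightarrow> real^'a^'a) \<Rightarrow> real^'a \<Rightarrow> real^'a \<Rightarrow> real" where
  "local_norm H x h = sqrt (h \<bullet> (H x *v h))"

definition dual_norm :: "(real^'a::finite \<Rightarrow> real^'a^'a) \<Rightarrow> real^'a \<Rightarrow> real^'a \<Rightarrow> real" where
  "dual_norm H x g = sqrt (g \<bullet> (matrix_inv (H x) *v g))"

definition op_norm :: "(real^'a::finite \<Rightarrow> real^'a^'a) \<Rightarrow> real^'a \<Rightarrow> real^'a^'a \<Rightarrow> real" where
  "op_norm H x M = (SUP v\<in>{v. v \<noteq> 0}. dual_norm H x (M *v v) / local_norm H x v)"

definition semi_strongly_sc :: "(real^'a::finite \<Rightarrow> real^'a^'a) \<Rightarrow> real \<Rightarrow> bool" where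
  "semi_strongly_sc H L \<longleftrightarrow>
     (\<forall>x y. op_norm H x (H y - H x) \<le> L * local_norm H x (y - x))"

definition pos_def_mat :: "real^'a^'a \<Rightarrow> bool" where
  "pos_def_mat A \<longleftrightarrow> (\<forall>v. v \<noteq> 0 \<longrightarrow> v \<bullet> (A *v v) > 0)"

definition loewner_le :: "real^'a^'a \<Rightarrow> real^'a^'a \<Rightarrow> bool" where
  "loewner_le A B \<longleftrightarrow> (\<forall>v. v \<bullet> ((B - A) *v v) \<ge> 0)"

definition aicn_alpha :: "(real^'a::finite \<Rightarrow> real^'a) \<Rightarrow> (real^'a \<Rightarrow> real^'a^'a) \<Rightarrow> real \<Rightarrow> real^'a \<Rightarrow> real" where
  "aicn_alpha g H L x =
     (if g x = 0 then 1
      else (-1 + sqrt (1 + 2 * L * dual_norm H x (g x))) / (L * dual_norm H x (g x)))"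

definition aicn_step :: "(real^'a::finite \<Rightarrow> real^'a) \<Rightarrow> (real^'a \<Rightarrow> real^'a^'a) \<Rightarrow> real \<Rightarrow> real^'a \<Rightarrow> real^'a" where
  "aicn_step g H L x = x - aicn_alpha g H L x *\<^sub>R (matrix_inv (H x) *v g x)"

end

theory Submission
  imports Defs
begin


definition symm :: "real^'a::finite^'a \<Rightarrow> bool" where
  "symm S \<longleftrightarrow> (\<forall>p q. p \<bullet> (S *v q) = q \<bullet> (S *v p))"

lemma pd_inv:
  fixes S :: "real^'a::finite^'a"
  assumes "pos_def_mat S"
  shows "S ** matrix_inv S = mat 1 \<and> matrix_inv S ** S = mat 1"
proof -
  have "\<forall>x. S *v x = 0 \<longrightarrow> x = 0"
    using assms unfolding pos_def_mat_def by (metis inner_zero_right less_irrefl)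
  then have "invertible S" using matrix_left_invertible_ker invertible_left_inverse by blast
  then show ?thesis unfolding matrix_inv_def invertible_def by (rule someI_ex)
qed

lemma inv_r: "pos_def_mat S \<Longrightarrow> S *v (matrix_inv S *v v) = v"
  by (metis matrix_vector_mul_assoc matrix_vector_mul_lid pd_inv)
lemma inv_l: "pos_def_mat S \<Longrightarrow> matrix_inv S *v (S *v v) = v"
  by (metis matrix_vector_mul_assoc matrix_vector_mul_lid pd_inv)

lemma quad_disc:
  fixes a b c :: real
  assumes "\<And>t. 0 \<le> a + 2*b*t + c*t^2" "c \<ge> 0"
  shows "b^2 \<le> a*c"
proof (cases "c = 0")
  case True
  have "b = 0"
  proof (rule ccontr)
    assume "b \<noteq> 0"
    have "0 \<le> a + 2*b*(-(a+1)/(2*b)) + c*(-(a+1)/(2*b))^2" by (rule assms)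
    also have "\<dots> = -1" using True \<open>b\<noteq>0\<close> by (simp add: field_simps)
    finally show False by simp
  qed
  then show ?thesis using True assms(1)[of 0] by simp
next
  case False
  have c0: "c > 0" using False assms(2) by simp
  have "0 \<le> a + 2*b*(-b/c) + c*(-b/c)^2" by (rule assms)
  also have "\<dots> = a - b^2/c" using c0 by (simp add: field_simps power2_eq_square)
  finally show ?thesis using c0 by (simp add: field_simps)
qed

lemma psd_of_pd: "pos_def_mat S \<Longrightarrow> 0 \<le> v \<bullet> (S *v v)"
  unfolding pos_def_mat_def by (cases "v = 0") (auto intro: less_imp_le)

lemma inv_psd:
  assumes "pos_def_mat S" shows "0 \<le> v \<bullet> (matrix_inv S *v v)"
proof -
  let ?w = "matrix_inv S *v v"
  have "v = S *v ?w" using inv_r[OF assms] by simp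
  then have "v \<bullet> ?w = ?w \<bullet> (S *v ?w)" by (metis inner_commute)
  then show ?thesis using psd_of_pd[OF assms] by simp
qed

lemma cs_form:
  fixes S :: "real^'a::finite^'a"
  assumes "symm S" "\<And>v. 0 \<le> v \<bullet> (S *v v)"
  shows "(p \<bullet> (S *v q))^2 \<le> (p \<bullet> (S *v p)) * (q \<bullet> (S *v q))"
proof (rule quad_disc)
  fix t :: real
  have sq: "q \<bullet> (S *v p) = p \<bullet> (S *v q)" using assms(1) unfolding symm_def by metis
  have "0 \<le> (p + t *\<^sub>R q) \<bullet> (S *v (p + t *\<^sub>R q))" by (rule assms(2))
  also have "\<dots> = p \<bullet> (S *v p) + 2 * (p \<bullet> (S *v q)) * t + (q \<bullet> (S *v q)) * t^2"
    by (simp add: algebra_simps inner_add_left inner_add_right sq power2_eq_square)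
  finally show "0 \<le> p \<bullet> (S *v p) + 2 * (p \<bullet> (S *v q)) * t + (q \<bullet> (S *v q)) * t^2" .
qed (rule assms(2))

lemma cs_dual:
  fixes S :: "real^'a::finite^'a"
  assumes "pos_def_mat S" "symm S"
  shows "(u \<bullet> m)^2 \<le> (u \<bullet> (S *v u)) * (m \<bullet> (matrix_inv S *v m))"
proof -
  let ?q = "matrix_inv S *v m"
  have Sq: "S *v ?q = m" using inv_r[OF assms(1)] .
  have "(u \<bullet> (S *v ?q))^2 \<le> (u \<bullet> (S *v u)) * (?q \<bullet> (S *v ?q))"
    by (rule cs_form[OF assms(2) psd_of_pd[OF assms(1)]])
  then show ?thesis using Sq by (simp add: inner_commute)
qed

lemma local_nonneg: "pos_def_mat (H x) \<Longrightarrow> 0 \<le> local_norm H x h" unfolding local_norm_def using psd_of_pd by simp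
lemma dual_nonneg: "pos_def_mat (H x) \<Longrightarrow> 0 \<le> dual_norm H x h" unfolding dual_norm_def using inv_psd by simp

lemma local_sq: assumes "pos_def_mat (H x)" shows "(local_norm H x h)^2 = h \<bullet> (H x *v h)"
  unfolding local_norm_def by (rule real_sqrt_pow2[OF psd_of_pd[OF assms]])
lemma dual_sq: assumes "pos_def_mat (H x)" shows "(dual_norm H x h)^2 = h \<bullet> (matrix_inv (H x) *v h)"
  unfolding dual_norm_def by (rule real_sqrt_pow2[OF inv_psd[OF assms]])

lemma cs_norms:
  assumes "pos_def_mat (H z)" "symm (H z)"
  shows "\<bar>u \<bullet> m\<bar> \<le> local_norm H z u * dual_norm H z m"
proof -
  have "(u \<bullet> m)^2 \<le> (local_norm H z u * dual_norm H z m)^2"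
    using cs_dual[OF assms, of u m] local_sq[of H z, OF assms(1)] dual_sq[of H z, OF assms(1)]
    by (simp add: power_mult_distrib)
  then have "\<bar>u \<bullet> m\<bar> \<le> \<bar>local_norm H z u * dual_norm H z m\<bar>"
    by (simp add: abs_le_square_iff)
  then show ?thesis using local_nonneg[of H z u, OF assms(1)] dual_nonneg[of H z m, OF assms(1)] by simp
qed

lemma op_bound:
  fixes H :: "real^'a::finite \<Rightarrow> real^'a^'a"
  assumes pd: "pos_def_mat (H z)" and sy: "symm (H z)"
  shows "dual_norm H z (M *v v) \<le> op_norm H z M * local_norm H z v"
proof (cases "v = 0")
  case True then show ?thesis using psd_of_pd[OF pd] by (simp add: local_norm_def dual_norm_def)
next
  case False
  let ?S = "H z"
  obtain B where B0': "B > 0" and B: "\<And>x. norm (matrix_inv ?S *v x) \<le> B * norm x"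
    using linear_bounded_pos[OF matrix_vector_mul_linear] by blast
  obtain B2 where B20': "B2 > 0" and B2: "\<And>x. norm (M *v x) \<le> B2 * norm x"
    using linear_bounded_pos[OF matrix_vector_mul_linear] by blast
  have B0: "B \<ge> 0" "B2 \<ge> 0" using B0' B20' by auto
  have dq: "(dual_norm H z m)^2 \<le> B * (norm m)^2" for m
  proof -
    have "(dual_norm H z m)^2 = m \<bullet> (matrix_inv ?S *v m)" by (rule dual_sq[of H z, OF pd])
    also have "\<dots> \<le> norm m * norm (matrix_inv ?S *v m)" by (rule norm_cauchy_schwarz)
    also have "\<dots> \<le> norm m * (B * norm m)" by (rule mult_left_mono[OF B]) simp
    finally show ?thesis by (simp add: power2_eq_square algebra_simps)
  qed
  have nl: "(norm x)^2 \<le> B * (local_norm H z x)^2" for x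
  proof (cases "x = 0")
    case True then show ?thesis using B0 by simp
  next
    case False
    have "(x \<bullet> x)^2 \<le> (local_norm H z x)^2 * (dual_norm H z x)^2"
      using cs_dual[OF pd sy, of x x] local_sq[of H z, OF pd] dual_sq[of H z, OF pd] by simp
    also have "\<dots> \<le> (local_norm H z x)^2 * (B * (norm x)^2)"
      by (rule mult_left_mono[OF dq]) simp
    finally have "(norm x)^2 * (norm x)^2 \<le> (B * (local_norm H z x)^2) * (norm x)^2"
      by (simp add: power2_norm_eq_inner[symmetric] power2_eq_square algebra_simps)
    then show ?thesis by (rule mult_right_le_imp_le) (use False in simp)
  qed
  let ?K = "B * B2"
  have rb: "dual_norm H z (M *v w) \<le> ?K * local_norm H z w" for w
  proof -
    have "(dual_norm H z (M *v w))^2 \<le> B * (norm (M *v w))^2" by (rule dq)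
    also have "\<dots> \<le> B * (B2 * norm w)^2"
      by (rule mult_left_mono[OF power_mono[OF B2]]) (use B0 in auto)
    also have "\<dots> = B * B2^2 * (norm w)^2" by (simp add: power_mult_distrib)
    also have "\<dots> \<le> B * B2^2 * (B * (local_norm H z w)^2)"
      by (rule mult_left_mono[OF nl]) (use B0 in simp)
    also have "\<dots> = (?K * local_norm H z w)^2" by (simp add: power_mult_distrib power2_eq_square)
    finally show ?thesis using B0 local_nonneg[of H z, OF pd]
      by (meson mult_nonneg_nonneg power2_le_imp_le)
  qed
  have lpos: "local_norm H z w > 0" if "w \<noteq> 0" for w :: "real^'a"
    using pd that unfolding pos_def_mat_def local_norm_def by simp
  have bdd: "bdd_above ((\<lambda>v. dual_norm H z (M *v v) / local_norm H z v) ` {v. v \<noteq> 0})"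
  proof (rule bdd_aboveI2)
    fix w :: "real^'a" assume "w \<in> {v. v \<noteq> 0}"
    then have "local_norm H z w > 0" using lpos by simp
    then show "dual_norm H z (M *v w) / local_norm H z w \<le> ?K"
      using rb[of w] by (simp add: divide_le_eq)
  qed
  have "dual_norm H z (M *v v) / local_norm H z v \<le> op_norm H z M"
    unfolding op_norm_def by (rule cSUP_upper[OF _ bdd]) (use False in simp)
  then show ?thesis using lpos[OF False] by (simp add: divide_le_eq)
qed




lemma mixed:
  fixes f :: "real^'n \<Rightarrow> real" and g :: "real^'n \<Rightarrow> real^'n" and H :: "real^'n \<Rightarrow> real^'n^'n"
  assumes grad: "\<And>x. (f has_derivative (\<lambda>h. g x \<bullet> h)) (at x)"
    and hess: "\<And>x. (g has_derivative (\<lambda>h. H x *v h)) (at x)"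
    and s: "s > 0"
  shows "\<exists>\<xi>. norm (\<xi> - x) \<le> s * (norm u + norm w) \<and>
    f (x + s *\<^sub>R u + s *\<^sub>R w) - f (x + s *\<^sub>R u) - f (x + s *\<^sub>R w) + f x = s^2 * (u \<bullet> (H \<xi> *v w))"
proof -
  let ?D = "\<lambda>t. g (x + t *\<^sub>R u + s *\<^sub>R w) \<bullet> u - g (x + t *\<^sub>R u) \<bullet> u"
  have d1: "((\<lambda>t. f (x + t *\<^sub>R u + s *\<^sub>R w)) has_derivative (\<lambda>h. g (x + t *\<^sub>R u + s *\<^sub>R w) \<bullet> (h *\<^sub>R u))) (at t within T)" for t T
    by (rule has_derivative_compose[OF _ grad]) (auto intro!: derivative_eq_intros)
  have d2: "((\<lambda>t. f (x + t *\<^sub>R u)) has_derivative (\<lambda>h. g (x + t *\<^sub>R u) \<bullet> (h *\<^sub>R u))) (at t within T)" for t T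
    by (rule has_derivative_compose[OF _ grad]) (auto intro!: derivative_eq_intros)
  have dphi: "((\<lambda>t. f (x + t *\<^sub>R u + s *\<^sub>R w) - f (x + t *\<^sub>R u)) has_derivative (\<lambda>h. h * ?D t)) (at t within T)" for t T
    by (rule has_derivative_eq_rhs[OF has_derivative_diff[OF d1 d2]]) (auto simp: algebra_simps)
  obtain t where t: "t \<in> {0<..<s}" and
    eq1: "(f (x + s *\<^sub>R u + s *\<^sub>R w) - f (x + s *\<^sub>R u)) - (f (x + 0 *\<^sub>R u + s *\<^sub>R w) - f (x + 0 *\<^sub>R u)) = (s - 0) * ?D t"
    using mvt_simple[OF s, of "\<lambda>t. f (x + t *\<^sub>R u + s *\<^sub>R w) - f (x + t *\<^sub>R u)" "\<lambda>t h. h * ?D t"] dphi by blast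
  let ?E = "\<lambda>r. u \<bullet> (H (x + t *\<^sub>R u + r *\<^sub>R w) *v w)"
  have d3: "((\<lambda>r. g (x + t *\<^sub>R u + r *\<^sub>R w)) has_derivative (\<lambda>h. H (x + t *\<^sub>R u + r *\<^sub>R w) *v (h *\<^sub>R w))) (at r within T)" for r T
    by (rule has_derivative_compose[OF _ hess]) (auto intro!: derivative_eq_intros)
  have dpsi: "((\<lambda>r. u \<bullet> g (x + t *\<^sub>R u + r *\<^sub>R w)) has_derivative (\<lambda>h. h * ?E r)) (at r within T)" for r T
    by (rule has_derivative_eq_rhs[OF has_derivative_inner_right[OF d3]]) (auto simp: matrix_vector_mult_scaleR)
  obtain r where r: "r \<in> {0<..<s}" and
    eq2: "u \<bullet> g (x + t *\<^sub>R u + s *\<^sub>R w) - u \<bullet> g (x + t *\<^sub>R u + 0 *\<^sub>R w) = (s - 0) * ?E r"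
    using mvt_simple[OF s, of "\<lambda>r. u \<bullet> g (x + t *\<^sub>R u + r *\<^sub>R w)" "\<lambda>r h. h * ?E r"] dpsi by blast
  have "?D t = s * ?E r" using eq2 by (simp add: inner_commute)
  then have Deq: "f (x + s *\<^sub>R u + s *\<^sub>R w) - f (x + s *\<^sub>R u) - f (x + s *\<^sub>R w) + f x = s^2 * ?E r"
    using eq1 by (simp add: power2_eq_square algebra_simps)
  have "norm ((x + t *\<^sub>R u + r *\<^sub>R w) - x) \<le> norm (t *\<^sub>R u) + norm (r *\<^sub>R w)"
    using norm_triangle_ineq[of "t *\<^sub>R u" "r *\<^sub>R w"] by (simp add: algebra_simps)
  also have "\<dots> = t * norm u + r * norm w" using t r by simp
  also have "\<dots> \<le> s * norm u + s * norm w"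
    using t r by (intro add_mono mult_right_mono) auto
  finally show ?thesis using Deq by (intro exI[of _ "x + t *\<^sub>R u + r *\<^sub>R w"]) (simp add: algebra_simps)
qed

lemma cont_form:
  fixes H :: "real^'n \<Rightarrow> real^'n^'n"
  assumes "continuous_on UNIV H"
  shows "continuous_on UNIV (\<lambda>z. u \<bullet> (H z *v w))"
proof -
  have "linear (\<lambda>A::real^'n^'n. A *v w)"
    by (auto simp: linear_iff matrix_vector_mult_add_rdistrib scaleR_matrix_vector_assoc)
  then have "continuous_on UNIV (\<lambda>A::real^'n^'n. A *v w)"
    by (simp add: linear_continuous_on linear_conv_bounded_linear)
  then have "continuous_on UNIV (\<lambda>z. H z *v w)"
    using continuous_on_compose[OF assms continuous_on_subset[OF _ subset_UNIV], of "\<lambda>A. A *v w"] by (simp add: o_def)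
  then show ?thesis by (intro continuous_intros)
qed

lemma abs_contra: fixes a b A B :: real
  shows "\<bar>a - A\<bar> < \<bar>A - B\<bar> / 2 \<Longrightarrow> \<bar>b - B\<bar> < \<bar>A - B\<bar> / 2 \<Longrightarrow> a = b \<Longrightarrow> False"
  by (simp add: abs_if split: if_splits)

lemma hess_symm:
  fixes f :: "real^'n \<Rightarrow> real" and g :: "real^'n \<Rightarrow> real^'n" and H :: "real^'n \<Rightarrow> real^'n^'n"
  assumes grad: "\<And>x. (f has_derivative (\<lambda>h. g x \<bullet> h)) (at x)"
    and hess: "\<And>x. (g has_derivative (\<lambda>h. H x *v h)) (at x)"
    and cont: "continuous_on UNIV H"
  shows "symm (H x)"
  unfolding symm_def
proof (intro allI, rule ccontr)
  fix u w
  let ?F = "\<lambda>z. u \<bullet> (H z *v w)" and ?G = "\<lambda>z. w \<bullet> (H z *v u)"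
  assume ne: "?F x \<noteq> ?G x"
  define e where "e = \<bar>?F x - ?G x\<bar> / 2"
  have e: "e > 0" using ne by (simp add: e_def)
  obtain d1 where d1: "d1 > 0" "\<And>z. dist z x < d1 \<Longrightarrow> dist (?F z) (?F x) < e"
    using cont_form[OF cont, of u w] e unfolding continuous_on_iff by (metis UNIV_I)
  obtain d2 where d2: "d2 > 0" "\<And>z. dist z x < d2 \<Longrightarrow> dist (?G z) (?G x) < e"
    using cont_form[OF cont, of w u] e unfolding continuous_on_iff by (metis UNIV_I)
  define s where "s = min d1 d2 / (2 * (norm u + norm w + 1))"
  have np: "norm u + norm w + 1 > 0" using norm_ge_zero[of u] norm_ge_zero[of w] by linarith
  have s: "s > 0" using d1 d2 np unfolding s_def by (intro divide_pos_pos) auto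
  have sb: "s * (norm u + norm w) < min d1 d2"
  proof -
    have "s * (norm u + norm w) < s * (norm u + norm w + 1)" using s by simp
    also have "\<dots> = min d1 d2 / 2" unfolding s_def
      using np by (simp add: field_simps)
    finally show ?thesis using d1 d2 by simp
  qed
  obtain \<xi> where \<xi>: "norm (\<xi> - x) \<le> s * (norm u + norm w)"
    "f (x + s *\<^sub>R u + s *\<^sub>R w) - f (x + s *\<^sub>R u) - f (x + s *\<^sub>R w) + f x = s^2 * ?F \<xi>"
    using mixed[OF grad hess s, of x u w] by blast
  obtain \<zeta> where \<zeta>: "norm (\<zeta> - x) \<le> s * (norm w + norm u)"
    "f (x + s *\<^sub>R w + s *\<^sub>R u) - f (x + s *\<^sub>R w) - f (x + s *\<^sub>R u) + f x = s^2 * ?G \<zeta>"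
    using mixed[OF grad hess s, of x w u] by blast
  have "s^2 * ?F \<xi> = s^2 * ?G \<zeta>" using \<xi>(2) \<zeta>(2) by (simp add: algebra_simps)
  then have FG: "?F \<xi> = ?G \<zeta>" using s by simp
  have "dist (?F \<xi>) (?F x) < e" using d1(2)[of \<xi>] \<xi>(1) sb by (simp add: dist_norm)
  moreover have "dist (?G \<zeta>) (?G x) < e" using d2(2)[of \<zeta>] \<zeta>(1) sb by (simp add: dist_norm add.commute)
  ultimately show False using FG abs_contra unfolding e_def dist_real_def by blast
qed




lemma qb:
  fixes H :: "real^'a::finite \<Rightarrow> real^'a^'a"
  assumes pd: "pos_def_mat (H z)" and sy: "symm (H z)" and sc: "semi_strongly_sc H Ls" and LL: "Ls \<le> L"
  shows "\<bar>u \<bullet> ((H w - H z) *v u)\<bar> \<le> L * local_norm H z (w - z) * (u \<bullet> (H z *v u))"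
proof -
  let ?M = "H w - H z"
  let ?lu = "local_norm H z u" and ?l = "local_norm H z (w - z)"
  have lu0: "?lu \<ge> 0" and l0: "?l \<ge> 0" using local_nonneg[of H z, OF pd] by auto
  have 1: "\<bar>u \<bullet> (?M *v u)\<bar> \<le> ?lu * dual_norm H z (?M *v u)" by (rule cs_norms[of H z, OF pd sy])
  have 2: "dual_norm H z (?M *v u) \<le> op_norm H z ?M * ?lu" by (rule op_bound[of H z, OF pd sy])
  have 3: "op_norm H z ?M \<le> L * ?l"
  proof -
    have "op_norm H z ?M \<le> Ls * ?l" using sc unfolding semi_strongly_sc_def by blast
    also have "\<dots> \<le> L * ?l" by (rule mult_right_mono[OF LL l0])
    finally show ?thesis .
  qed
  have "dual_norm H z (?M *v u) \<le> L * ?l * ?lu" using 2 mult_right_mono[OF 3 lu0] by linarith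
  then have "?lu * dual_norm H z (?M *v u) \<le> ?lu * (L * ?l * ?lu)" by (rule mult_left_mono[OF _ lu0])
  also have "\<dots> = L * ?l * ?lu^2" by (simp add: power2_eq_square)
  also have "\<dots> = L * ?l * (u \<bullet> (H z *v u))" using local_sq[of H z, OF pd] by simp
  finally show ?thesis using 1 by linarith
qed

lemma loewner_inv:
  fixes A B :: "real^'a::finite^'a"
  assumes pdA: "pos_def_mat A" and pdB: "pos_def_mat B" and syA: "symm A" and k: "k > 0"
    and le: "\<And>v. k * (v \<bullet> (A *v v)) \<le> v \<bullet> (B *v v)"
  shows "v \<bullet> (matrix_inv B *v v) \<le> (1/k) * (v \<bullet> (matrix_inv A *v v))"
proof -
  let ?w = "matrix_inv B *v v"
  have Bw: "B *v ?w = v" by (rule inv_r[OF pdB])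
  define \<beta> where "\<beta> = ?w \<bullet> (B *v ?w)"
  define \<gamma> where "\<gamma> = v \<bullet> (matrix_inv A *v v)"
  have b: "v \<bullet> ?w = \<beta>" unfolding \<beta>_def Bw by (simp add: inner_commute)
  have b0: "\<beta> \<ge> 0" unfolding \<beta>_def by (rule psd_of_pd[OF pdB])
  have g0: "\<gamma> \<ge> 0" unfolding \<gamma>_def by (rule inv_psd[OF pdA])
  have cs: "(?w \<bullet> v)^2 \<le> (?w \<bullet> (A *v ?w)) * \<gamma>" unfolding \<gamma>_def by (rule cs_dual[OF pdA syA])
  have wa: "?w \<bullet> (A *v ?w) \<le> \<beta> / k" using le[of ?w] k unfolding \<beta>_def by (simp add: field_simps)
  have "\<beta>^2 \<le> (\<beta> / k) * \<gamma>"
  proof -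
    have "\<beta>^2 = (?w \<bullet> v)^2" using b by (simp add: inner_commute)
    also have "\<dots> \<le> (?w \<bullet> (A *v ?w)) * \<gamma>" by (rule cs)
    also have "\<dots> \<le> (\<beta> / k) * \<gamma>" by (rule mult_right_mono[OF wa g0])
    finally show ?thesis .
  qed
  then have "\<beta> \<le> \<gamma> / k"
  proof (cases "\<beta> = 0")
    case True then show ?thesis using g0 k by simp
  next
    case False
    then have "\<beta> > 0" using b0 by simp
    moreover assume "\<beta>^2 \<le> (\<beta> / k) * \<gamma>"
    ultimately show ?thesis using mult_left_le_imp_le[of \<beta> \<beta> "\<gamma> / k"] by (simp add: power2_eq_square)
  qed
  then show ?thesis using b unfolding \<gamma>_def by simp
qed

lemma numeric:
  fixes c c' :: real
  assumes "0 \<le> c'" "c' \<le> c" "c < 1"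
  shows "(1 - c)^2 * (1 + 2 * c' * sqrt (1 + 2 * c')) \<le> 1"
proof -
  let ?s = "sqrt (1 + 2 * c')"
  have s0: "?s \<ge> 0" using assms by simp
  have ss: "?s^2 = 1 + 2 * c'" using assms by simp
  have "(?s * (1 - c'))^2 = (1 + 2*c') * (1 - c')^2" by (simp add: power_mult_distrib ss)
  also have "\<dots> = 1 - c'^2 * (3 - 2 * c')" by (simp add: power2_eq_square algebra_simps)
  also have "\<dots> \<le> 1" using assms by (simp add: mult_nonneg_nonneg)
  finally have t: "?s * (1 - c') \<le> 1"
    using power2_le_imp_le[of "?s * (1 - c')" 1] by simp
  have "(1 - c)^2 \<le> (1 - c')^2" using assms by (intro power_mono) auto
  then have "(1 - c)^2 * (1 + 2 * c' * ?s) \<le> (1 - c')^2 * (1 + 2 * c' * ?s)"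
    using assms s0 by (intro mult_right_mono) auto
  also have "\<dots> = (1 - c')^2 + 2 * c' * (1 - c') * (?s * (1 - c'))" by (simp add: power2_eq_square algebra_simps)
  also have "\<dots> \<le> (1 - c')^2 + 2 * c' * (1 - c') * 1"
    using assms t by (intro add_left_mono mult_left_mono) auto
  also have "\<dots> = 1 - c'^2" by (simp add: power2_eq_square algebra_simps)
  also have "\<dots> \<le> 1" by simp
  finally show ?thesis .
qed




lemma mv_neg: "(A::real^'a::finite^'b::finite) *v (- v) = - (A *v v)"
  using matrix_vector_mult_diff_distrib[of A 0 v] by simp

theorem lemma7:
  fixes f :: "real^'n \<Rightarrow> real"
    and g :: "real^'n \<Rightarrow> real^'n"
    and H :: "real^'n \<Rightarrow> real^'n^'n"
    and L_semi L_est c :: real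
    and xk :: "real^'n"
  assumes convex: "convex_on UNIV f"
    and grad: "\<And>x. (f has_derivative (\<lambda>h. g x \<bullet> h)) (at x)"
    and hess: "\<And>x. (g has_derivative (\<lambda>h. H x *v h)) (at x)"
    and hess_cont: "continuous_on UNIV H"
    and pd: "\<And>x. pos_def_mat (H x)"
    and sc: "semi_strongly_sc H L_semi"
    and L_pos: "0 < L_est"
    and L_ge: "L_semi \<le> L_est"
    and c: "0 < c" "c < 1"
    and small: "dual_norm H xk (g xk) \<le> ((2 * c + 1)^2 - 1) / (2 * L_est)"
  shows "loewner_le (matrix_inv (H (aicn_step g H L_est xk)))
                    ((1 / (1 - c)^2) *\<^sub>R matrix_inv (H xk))"
proof -
  let ?x = xk
  define y where "y = aicn_step g H L_est xk"
  define h where "h = y - ?x"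
  define L where "L = L_est"
  define G where "G = dual_norm H ?x (g ?x)"
  define \<alpha> where "\<alpha> = aicn_alpha g H L_est ?x"
  have sy: "\<And>z. symm (H z)" by (rule hess_symm[OF grad hess hess_cont])
  have G0: "G \<ge> 0" unfolding G_def by (rule dual_nonneg[OF pd])
  have hdef: "h = - (\<alpha> *\<^sub>R (matrix_inv (H ?x) *v g ?x))"
    unfolding h_def y_def aicn_step_def \<alpha>_def by simp
  have "h \<bullet> (H ?x *v h) = \<alpha>^2 * ((matrix_inv (H ?x) *v g ?x) \<bullet> (H ?x *v (matrix_inv (H ?x) *v g ?x)))"
    unfolding hdef by (simp add: mv_neg matrix_vector_mult_scaleR power2_eq_square)
  also have "\<dots> = \<alpha>^2 * G^2" unfolding G_def dual_sq[of H ?x, OF pd] inv_r[OF pd] by (simp add: inner_commute)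
  finally have "local_norm H ?x h = sqrt ((\<bar>\<alpha>\<bar> * G)^2)" unfolding local_norm_def by (simp add: power_mult_distrib)
  then have r0: "local_norm H ?x h = \<bar>\<alpha>\<bar> * G" using G0 by simp
  define r where "r = local_norm H ?x h"
  have r00: "r \<ge> 0" unfolding r_def by (rule local_nonneg[OF pd])
  have Lr: "L * r \<le> 2 * c"
  proof (cases "g ?x = 0 \<or> G = 0")
    case True
    then have "G = 0" unfolding G_def dual_norm_def by auto
    then show ?thesis using r0 c unfolding r_def by simp
  next
    case False
    then have gne: "g ?x \<noteq> 0" and Gp: "G > 0" using G0 by auto
    have LG: "L * G > 0" using Gp L_pos unfolding L_def by simp
    have a: "\<alpha> = (-1 + sqrt (1 + 2 * L * G)) / (L * G)"
      unfolding \<alpha>_def aicn_alpha_def using gne unfolding G_def L_def by simp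
    have "1 \<le> 1 + 2 * L * G" using LG by (simp add: mult.commute[of G L])
    then have sq1: "sqrt (1 + 2 * L * G) \<ge> 1" using real_sqrt_le_mono by fastforce
    have "\<alpha> \<ge> 0" unfolding a using sq1 LG by (intro divide_nonneg_pos) auto
    then have "L * r = (L * G) * \<alpha>" unfolding r_def r0 by (simp add: algebra_simps)
    also have "\<dots> = sqrt (1 + 2 * L * G) - 1" unfolding a using LG by simp
    also have "\<dots> \<le> 2 * c"
    proof -
      have "2 * L * G \<le> (2 * c + 1)^2 - 1" using small L_pos unfolding G_def L_def by (simp add: field_simps)
      then have "sqrt (1 + 2 * L * G) \<le> sqrt ((2 * c + 1)^2)" by (intro real_sqrt_le_mono) simp
      then show ?thesis using c by simp
    qed
    finally show ?thesis .
  qed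
  define c' where "c' = L * r / 2"
  have c'0: "0 \<le> c'" "c' \<le> c" using Lr r00 L_pos unfolding c'_def L_def by auto
  have yx: "y - ?x = h" unfolding h_def by simp
  have xy: "?x - y = - h" unfolding h_def by simp
  have hx: "h \<bullet> (H ?x *v h) = r^2" unfolding r_def by (rule local_sq[of H ?x, OF pd, symmetric])
  have "\<bar>h \<bullet> ((H y - H ?x) *v h)\<bar> \<le> L * local_norm H ?x (y - ?x) * (h \<bullet> (H ?x *v h))"
    unfolding L_def by (rule qb[OF pd sy sc L_ge])
  then have "\<bar>h \<bullet> ((H y - H ?x) *v h)\<bar> \<le> L * r * r^2" unfolding yx hx r_def .
  moreover have "h \<bullet> ((H y - H ?x) *v h) = h \<bullet> (H y *v h) - r^2"
    unfolding hx[symmetric] by (simp only: matrix_vector_mult_diff_rdistrib inner_diff_right)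
  ultimately have "h \<bullet> (H y *v h) - r^2 \<le> L * r * r^2" by linarith
  moreover have "L * r * r^2 = 2 * c' * r^2" unfolding c'_def by simp
  moreover have "r^2 * (1 + 2 * c') = r^2 + 2 * c' * r^2" by (simp add: distrib_left)
  ultimately have hy: "h \<bullet> (H y *v h) \<le> r^2 * (1 + 2 * c')" by linarith
  define ly where "ly = local_norm H y (?x - y)"
  have ly0: "ly \<ge> 0" unfolding ly_def by (rule local_nonneg[OF pd])
  have "ly^2 = (- h) \<bullet> (H y *v (- h))" unfolding ly_def xy by (rule local_sq[of H y, OF pd])
  also have "\<dots> = h \<bullet> (H y *v h)" by (simp only: mv_neg inner_minus_left inner_minus_right minus_minus)
  also have "\<dots> \<le> (r * sqrt (1 + 2 * c'))^2" using hy c'0 by (simp add: power_mult_distrib)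
  finally have "ly^2 \<le> (r * sqrt (1 + 2 * c'))^2" .
  then have lyb: "ly \<le> r * sqrt (1 + 2 * c')"
    by (rule power2_le_imp_le) (use r00 c'0 in simp)
  have "L * ly \<le> L * (r * sqrt (1 + 2 * c'))" using mult_left_mono[OF lyb, of L] L_pos unfolding L_def by simp
  also have "\<dots> = 2 * c' * sqrt (1 + 2 * c')" unfolding c'_def by simp
  finally have Lly: "L * ly \<le> 2 * c' * sqrt (1 + 2 * c')" .
  define k where "k = (1 - c)^2"
  have k0: "k > 0" unfolding k_def using c by simp
  have key: "k * (v \<bullet> (H ?x *v v)) \<le> v \<bullet> (H y *v v)" for v
  proof -
    have "\<bar>v \<bullet> ((H ?x - H y) *v v)\<bar> \<le> L * ly * (v \<bullet> (H y *v v))"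
      unfolding L_def ly_def by (rule qb[OF pd sy sc L_ge])
    moreover have "v \<bullet> ((H ?x - H y) *v v) = v \<bullet> (H ?x *v v) - v \<bullet> (H y *v v)"
      by (simp only: matrix_vector_mult_diff_rdistrib inner_diff_right)
    moreover have "(1 + L * ly) * (v \<bullet> (H y *v v)) = v \<bullet> (H y *v v) + L * ly * (v \<bullet> (H y *v v))"
      by (simp only: distrib_right mult_1)
    ultimately have "v \<bullet> (H ?x *v v) \<le> (1 + L * ly) * (v \<bullet> (H y *v v))"
      by linarith
    also have "\<dots> \<le> (1 + 2 * c' * sqrt (1 + 2 * c')) * (v \<bullet> (H y *v v))"
      by (rule mult_right_mono) (use Lly psd_of_pd[OF pd] in simp_all)
    finally have "k * (v \<bullet> (H ?x *v v)) \<le> k * ((1 + 2 * c' * sqrt (1 + 2 * c')) * (v \<bullet> (H y *v v)))"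
      by (rule mult_left_mono) (use k0 in simp)
    also have "\<dots> = (k * (1 + 2 * c' * sqrt (1 + 2 * c'))) * (v \<bullet> (H y *v v))" by (rule mult.assoc[symmetric])
    also have "\<dots> \<le> 1 * (v \<bullet> (H y *v v))"
      unfolding k_def by (rule mult_right_mono[OF numeric[OF c'0 c(2)] psd_of_pd[OF pd]])
    finally show ?thesis by (simp only: mult_1)
  qed
  show ?thesis unfolding loewner_le_def y_def[symmetric]
  proof
    fix v
    have "v \<bullet> (matrix_inv (H y) *v v) \<le> (1 / k) * (v \<bullet> (matrix_inv (H ?x) *v v))"
      by (rule loewner_inv[OF pd pd sy k0 key])
    then show "0 \<le> v \<bullet> (((1 / (1 - c)^2) *\<^sub>R matrix_inv (H ?x) - matrix_inv (H y)) *v v)"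
      unfolding k_def by (simp add: matrix_vector_mult_diff_rdistrib inner_diff_right
          scaleR_matrix_vector_assoc[symmetric])
  qed
qed


end
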